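(* For every subdirectly irreducible state-morphism algebra $(\mathbf A,\tau)$ there is a subdirectly irreducible algebra $\mathbf B$ of the same type as $\mathbf A$ such that $(\mathbf A,\tau)$ is $\mathbf B$-subdiagonal, i.e. $(\mathbf A,\tau)$ embeds into $D(\mathbf B)=(\mathbf B\times\mathbf B,\tau_B)$.
   Context: Let $F$ be an arbitrary algebraic type. A state-morphism on an algebra $\mathbf A$ of type $F$ is an endomorphism $\tau:\mathbf A\to\mathbf A$ with $\tau\circ\tau=\tau$; $(\mathbf A,\tau)$, viewed as an algebra of type $F$ extended by the unary operation $\tau$, is a state-morphism algebra, and subdirect irreducibility of $(\mathbf A,\tau)$ refers to this extended algebra. For an algebra $\mathbf B$ of type $F$, $D(\mathbf B)=(\mathbf B\times\mathbf B,\tau_B)$ with $\tau_B(x,y)=(x,x)$ is the diagonal state-morphism algebra; an embedding of state-morphism algebras is an injective homomorphism of type $F$ commuting with the unary operations. *)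

theory Defs
  imports Main
begin

text \<open>An algebraic type F is given by a set of operation symbols (the type 'f)
  together with an arity function ar :: 'f => nat.  An algebra of type F is a
  carrier set with an interpretation of every symbol as a finitary operation
  (given on argument lists of the right length).\<close>

record ('f, 'a) alg =
  carrier :: "'a set"
  ops :: "'f \<Rightarrow> 'a list \<Rightarrow> 'a"

definition is_algebra :: "('f \<Rightarrow> nat) \<Rightarrow> ('f, 'a) alg \<Rightarrow> bool" where
  "is_algebra ar A \<longleftrightarrow>
     (\<forall>f xs. length xs = ar f \<and> set xs \<subseteq> carrier A \<longrightarrow> ops A f xs \<in> carrier A)"

definition is_hom :: "('f \<Rightarrow> nat) \<Rightarrow> ('f, 'a) alg \<Rightarrow> ('f, 'b) alg \<Rightarrow> ('a \<Rightarrow> 'b) \<Rightarrow> bool" where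
  "is_hom ar A B h \<longleftrightarrow>
     (\<forall>x\<in>carrier A. h x \<in> carrier B) \<and>
     (\<forall>f xs. length xs = ar f \<and> set xs \<subseteq> carrier A \<longrightarrow> h (ops A f xs) = ops B f (map h xs))"

definition is_embedding :: "('f \<Rightarrow> nat) \<Rightarrow> ('f, 'a) alg \<Rightarrow> ('f, 'b) alg \<Rightarrow> ('a \<Rightarrow> 'b) \<Rightarrow> bool" where
  "is_embedding ar A B h \<longleftrightarrow> is_hom ar A B h \<and> inj_on h (carrier A)"

definition is_congruence :: "('f \<Rightarrow> nat) \<Rightarrow> ('f, 'a) alg \<Rightarrow> ('a \<times> 'a) set \<Rightarrow> bool" where
  "is_congruence ar A \<theta> \<longleftrightarrow>
     equiv (carrier A) \<theta> \<and>
     (\<forall>f xs ys. length xs = ar f \<and> length ys = ar f \<and> list_all2 (\<lambda>x y. (x, y) \<in> \<theta>) xs ys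
        \<longrightarrow> (ops A f xs, ops A f ys) \<in> \<theta>)"

definition subdirectly_irreducible :: "('f \<Rightarrow> nat) \<Rightarrow> ('f, 'a) alg \<Rightarrow> bool" where
  "subdirectly_irreducible ar A \<longleftrightarrow>
     is_algebra ar A \<and>
     (\<exists>x\<in>carrier A. \<exists>y\<in>carrier A. x \<noteq> y) \<and>
     \<Inter>{\<theta>. is_congruence ar A \<theta> \<and> \<theta> \<noteq> Id_on (carrier A)} \<noteq> Id_on (carrier A)"

text \<open>The extended type F + tau: symbols 'f option, with None the new unary symbol.\<close>

definition ext_ar :: "('f \<Rightarrow> nat) \<Rightarrow> 'f option \<Rightarrow> nat" where
  "ext_ar ar = case_option 1 ar"

definition ext_alg :: "('f, 'a) alg \<Rightarrow> ('a \<Rightarrow> 'a) \<Rightarrow> ('f option, 'a) alg" where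
  "ext_alg A \<tau> = \<lparr> carrier = carrier A,
     ops = (\<lambda>g xs. case g of None \<Rightarrow> \<tau> (hd xs) | Some f \<Rightarrow> ops A f xs) \<rparr>"

definition is_state_morphism :: "('f \<Rightarrow> nat) \<Rightarrow> ('f, 'a) alg \<Rightarrow> ('a \<Rightarrow> 'a) \<Rightarrow> bool" where
  "is_state_morphism ar A \<tau> \<longleftrightarrow>
     is_hom ar A A \<tau> \<and> (\<forall>x\<in>carrier A. \<tau> (\<tau> x) = \<tau> x)"

definition state_morphism_algebra :: "('f \<Rightarrow> nat) \<Rightarrow> ('f, 'a) alg \<Rightarrow> ('a \<Rightarrow> 'a) \<Rightarrow> bool" where
  "state_morphism_algebra ar A \<tau> \<longleftrightarrow> is_algebra ar A \<and> is_state_morphism ar A \<tau>"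

definition square_alg :: "('f, 'b) alg \<Rightarrow> ('f, 'b \<times> 'b) alg" where
  "square_alg B = \<lparr> carrier = carrier B \<times> carrier B,
     ops = (\<lambda>f ps. (ops B f (map fst ps), ops B f (map snd ps))) \<rparr>"

definition diag_tau :: "'b \<times> 'b \<Rightarrow> 'b \<times> 'b" where
  "diag_tau p = (fst p, fst p)"

definition D_alg :: "('f, 'b) alg \<Rightarrow> ('f option, 'b \<times> 'b) alg" where
  "D_alg B = ext_alg (square_alg B) diag_tau"

end

theory Submission
  imports Defs
begin

definition quot_alg :: "('f,'a) alg \<Rightarrow> ('a\<times>'a) set \<Rightarrow> ('f,'a set) alg" where
 "quot_alg A \<psi> = \<lparr>carrier = carrier A // \<psi>,
    ops = (\<lambda>f Xs. \<psi> `` {ops A f (map (\<lambda>X. SOME x. x \<in> X) Xs)})\<rparr>"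

lemma cong_sub: "is_congruence ar A \<theta> \<Longrightarrow> \<theta> \<subseteq> carrier A \<times> carrier A"
  unfolding is_congruence_def equiv_def refl_on_def by blast

lemma list_all2_carrier:
  assumes "is_congruence ar A \<theta>" "list_all2 (\<lambda>x y. (x, y) \<in> \<theta>) xs ys"
  shows "set xs \<subseteq> carrier A" "set ys \<subseteq> carrier A"
  using assms(2) cong_sub[OF assms(1)]
  by (induct xs ys rule: list_all2_induct; auto)+

lemma cong_Id: "is_algebra ar A \<Longrightarrow> is_congruence ar A (Id_on (carrier A))"
proof -
  assume alg: "is_algebra ar A"
  have "xs = ys \<and> set xs \<subseteq> carrier A" if "list_all2 (\<lambda>x y. (x, y) \<in> Id_on (carrier A)) xs ys" for xs ys
    using that by (induct xs ys rule: list_all2_induct) auto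
  then show ?thesis using alg unfolding is_congruence_def is_algebra_def
    by (auto simp: equiv_def refl_on_def sym_def trans_def) (metis Id_onI)
qed

lemma quot_hom:
  assumes alg: "is_algebra ar A" and c: "is_congruence ar A \<psi>"
  shows "is_hom ar A (quot_alg A \<psi>) (\<lambda>x. \<psi> `` {x})"
  unfolding is_hom_def
proof (intro conjI allI impI ballI)
  have eq: "equiv (carrier A) \<psi>" using c by (simp add: is_congruence_def)
  fix x assume "x \<in> carrier A"
  then show "\<psi> `` {x} \<in> carrier (quot_alg A \<psi>)" by (simp add: quot_alg_def quotientI)
next
  have eq: "equiv (carrier A) \<psi>" using c by (simp add: is_congruence_def)
  fix f xs
  assume a: "length xs = ar f \<and> set xs \<subseteq> carrier A"
  let ?ys = "map (\<lambda>x. SOME y. y \<in> \<psi> `` {x}) xs"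
  have "list_all2 (\<lambda>x y. (x, y) \<in> \<psi>) xs ?ys"
  proof (rule list_all2_all_nthI)
    fix n assume n: "n < length xs"
    then have "xs ! n \<in> carrier A" using a by auto
    then have "xs ! n \<in> \<psi> `` {xs ! n}" using eq by (auto simp: equiv_def refl_on_def)
    then have "(SOME y. y \<in> \<psi> `` {xs ! n}) \<in> \<psi> `` {xs ! n}" by (rule someI)
    then show "(xs ! n, ?ys ! n) \<in> \<psi>" using n by simp
  qed simp
  then have "(ops A f xs, ops A f ?ys) \<in> \<psi>" using c a by (simp add: is_congruence_def)
  then have "\<psi> `` {ops A f xs} = \<psi> `` {ops A f ?ys}" using eq by (intro equiv_class_eq)
  then show "\<psi> `` {ops A f xs} = ops (quot_alg A \<psi>) f (map (\<lambda>x. \<psi> `` {x}) xs)"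
    by (simp add: quot_alg_def o_def)
qed

lemma quot_algebra:
  assumes alg: "is_algebra ar A" and c: "is_congruence ar A \<psi>"
  shows "is_algebra ar (quot_alg A \<psi>)"
  unfolding is_algebra_def
proof (intro allI impI)
  have eq: "equiv (carrier A) \<psi>" using c by (simp add: is_congruence_def)
  fix f Xs
  assume a: "length Xs = ar f \<and> set Xs \<subseteq> carrier (quot_alg A \<psi>)"
  have "set (map (\<lambda>X. SOME x. x \<in> X) Xs) \<subseteq> carrier A"
  proof
    fix y assume "y \<in> set (map (\<lambda>X. SOME x. x \<in> X) Xs)"
    then obtain X where X: "X \<in> set Xs" "y = (SOME x. x \<in> X)" by auto
    then have "X \<in> carrier A // \<psi>" using a by (auto simp: quot_alg_def)
    then obtain z where z: "z \<in> carrier A" "X = \<psi> `` {z}" by (auto elim: quotientE)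
    then have "z \<in> X" using eq by (auto simp: equiv_def refl_on_def)
    then have "y \<in> X" using X by (metis someI)
    then show "y \<in> carrier A" using z eq by (auto simp: equiv_def refl_on_def)
  qed
  then have "ops A f (map (\<lambda>X. SOME x. x \<in> X) Xs) \<in> carrier A"
    using alg a by (simp add: is_algebra_def)
  then show "ops (quot_alg A \<psi>) f Xs \<in> carrier (quot_alg A \<psi>)"
    by (simp add: quot_alg_def quotientI)
qed

lemma chain_union_cong:
  assumes alg: "is_algebra ar A" and C: "C \<in> chains {\<theta>. is_congruence ar A \<theta> \<and> (a,b) \<notin> \<theta>}"
    and ne: "C \<noteq> {}"
  shows "is_congruence ar A (\<Union>C) \<and> (a,b) \<notin> \<Union>C"
proof -
  have Cs: "\<And>\<theta>. \<theta> \<in> C \<Longrightarrow> is_congruence ar A \<theta> \<and> (a,b) \<notin> \<theta>" using C by (auto simp: chains_def)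
  have ch: "subset.chain UNIV C" using C by (auto simp: chains_def chain_subset_alt_def)
  have cmp: "\<And>\<theta>1 \<theta>2. \<theta>1 \<in> C \<Longrightarrow> \<theta>2 \<in> C \<Longrightarrow> \<theta>1 \<subseteq> \<theta>2 \<or> \<theta>2 \<subseteq> \<theta>1"
    using ch by (auto simp: subset.chain_def)
  have eqs: "\<And>\<theta>. \<theta> \<in> C \<Longrightarrow> equiv (carrier A) \<theta>" using Cs by (simp add: is_congruence_def)
  obtain \<theta>0 where t0: "\<theta>0 \<in> C" using ne by blast
  have "equiv (carrier A) (\<Union>C)"
  proof (rule equivI)
    show "\<Union>C \<subseteq> carrier A \<times> carrier A" using eqs by (auto simp: equiv_def)
    show "refl_on (carrier A) (\<Union>C)"
    proof (rule refl_onI)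
      fix x assume "x \<in> carrier A" then show "(x,x) \<in> \<Union>C" using eqs[OF t0] t0
        by (auto simp: equiv_def refl_on_def)
    qed
    show "sym (\<Union>C)" using eqs unfolding sym_def equiv_def by blast
    show "trans (\<Union>C)" unfolding trans_def
    proof (intro allI impI)
      fix x y z assume "(x,y) \<in> \<Union>C" "(y,z) \<in> \<Union>C"
      then obtain t1 t2 where "t1 \<in> C" "t2 \<in> C" "(x,y) \<in> t1" "(y,z) \<in> t2" by auto
      then show "(x,z) \<in> \<Union>C" using cmp eqs unfolding equiv_def trans_def by blast
    qed
  qed
  moreover have "(ops A f xs, ops A f ys) \<in> \<Union>C"
    if l: "length xs = ar f" "length ys = ar f" "list_all2 (\<lambda>x y. (x, y) \<in> \<Union>C) xs ys" for f xs ys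
  proof -
    have "set (zip xs ys) \<subseteq> \<Union>C" using l(3) by (auto simp: list_all2_iff)
    then obtain t where t: "t \<in> C" "set (zip xs ys) \<subseteq> t"
      using finite_subset_Union_chain[OF finite_set _ ne ch] by blast
    then have "list_all2 (\<lambda>x y. (x, y) \<in> t) xs ys" using l(3) by (auto simp: list_all2_iff)
    then have "(ops A f xs, ops A f ys) \<in> t" using Cs[OF t(1)] l by (simp add: is_congruence_def)
    then show ?thesis using t by blast
  qed
  ultimately show ?thesis using Cs unfolding is_congruence_def by blast
qed

lemma max_cong_exists:
  assumes alg: "is_algebra ar A" and ab: "a \<noteq> b"
  shows "\<exists>\<psi>. is_congruence ar A \<psi> \<and> (a,b) \<notin> \<psi> \<and>
     (\<forall>\<theta>. is_congruence ar A \<theta> \<and> (a,b) \<notin> \<theta> \<and> \<psi> \<subseteq> \<theta> \<longrightarrow> \<theta> = \<psi>)"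
proof -
  let ?S = "{\<theta>. is_congruence ar A \<theta> \<and> (a,b) \<notin> \<theta>}"
  have "\<forall>C\<in>chains ?S. \<exists>U\<in>?S. \<forall>X\<in>C. X \<subseteq> U"
  proof
    fix C assume C: "C \<in> chains ?S"
    show "\<exists>U\<in>?S. \<forall>X\<in>C. X \<subseteq> U"
    proof (cases "C = {}")
      case True
      then show ?thesis using cong_Id[OF alg] ab by auto
    next
      case False
      then show ?thesis using chain_union_cong[OF alg C False] by blast
    qed
  qed
  from Zorn_Lemma2[OF this] show ?thesis by blast
qed

lemma quot_SI:
  assumes alg: "is_algebra ar A" and c: "is_congruence ar A \<psi>"
    and a: "a \<in> carrier A" and b: "b \<in> carrier A" and abn: "(a,b) \<notin> \<psi>"
    and mx: "\<forall>\<theta>. is_congruence ar A \<theta> \<and> (a,b) \<notin> \<theta> \<and> \<psi> \<subseteq> \<theta> \<longrightarrow> \<theta> = \<psi>"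
  shows "subdirectly_irreducible ar (quot_alg A \<psi>)"
proof -
  let ?B = "quot_alg A \<psi>"
  let ?g = "\<lambda>x. \<psi> `` {x}"
  have eq: "equiv (carrier A) \<psi>" using c by (simp add: is_congruence_def)
  have hom: "is_hom ar A ?B ?g" by (rule quot_hom[OF alg c])
  have cB: "carrier ?B = carrier A // \<psi>" by (simp add: quot_alg_def)
  have gab: "?g a \<noteq> ?g b" using eq_equiv_class_iff[OF eq a b] abn by simp
  have gin: "\<And>x. x \<in> carrier A \<Longrightarrow> ?g x \<in> carrier ?B" using cB by (simp add: quotientI)
  have key: "(?g a, ?g b) \<in> \<Theta>" if T: "is_congruence ar ?B \<Theta>" "\<Theta> \<noteq> Id_on (carrier ?B)" for \<Theta>
  proof -
    have eT: "equiv (carrier ?B) \<Theta>" using T by (simp add: is_congruence_def)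
    define \<phi> where "\<phi> = {(x,y). x \<in> carrier A \<and> y \<in> carrier A \<and> (?g x, ?g y) \<in> \<Theta>}"
    have "equiv (carrier A) \<phi>"
    proof (rule equivI)
      show "\<phi> \<subseteq> carrier A \<times> carrier A" unfolding \<phi>_def by blast
      show "refl_on (carrier A) \<phi>" using eT gin unfolding \<phi>_def equiv_def refl_on_def by blast
      show "sym \<phi>" using eT unfolding \<phi>_def equiv_def sym_def by auto
      show "trans \<phi>" using eT unfolding \<phi>_def equiv_def trans_def by blast
    qed
    moreover have "(ops A f xs, ops A f ys) \<in> \<phi>"
      if l: "length xs = ar f" "length ys = ar f" "list_all2 (\<lambda>x y. (x, y) \<in> \<phi>) xs ys" for f xs ys
    proof -
      have sx: "set xs \<subseteq> carrier A" and sy: "set ys \<subseteq> carrier A"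
        using l(3) unfolding \<phi>_def by (induct xs ys rule: list_all2_induct; auto)+
      have "list_all2 (\<lambda>x y. (x, y) \<in> \<Theta>) (map ?g xs) (map ?g ys)"
        using l(3) unfolding \<phi>_def list_all2_map1 list_all2_map2
        by (rule list_all2_mono) auto
      then have "(ops ?B f (map ?g xs), ops ?B f (map ?g ys)) \<in> \<Theta>"
        using T(1) l by (simp add: is_congruence_def)
      moreover have "?g (ops A f xs) = ops ?B f (map ?g xs)" "?g (ops A f ys) = ops ?B f (map ?g ys)"
        using hom l sx sy unfolding is_hom_def by blast+
      moreover have "ops A f xs \<in> carrier A" "ops A f ys \<in> carrier A"
        using alg l sx sy unfolding is_algebra_def by blast+
      ultimately show ?thesis unfolding \<phi>_def by simp
    qed
    ultimately have cphi: "is_congruence ar A \<phi>" unfolding is_congruence_def by blast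
    have sub: "\<psi> \<subseteq> \<phi>"
    proof
      fix p assume p: "p \<in> \<psi>"
      obtain x y where xy: "p = (x,y)" by (cases p)
      have xyc: "x \<in> carrier A" "y \<in> carrier A" using p xy eq by (auto simp: equiv_def refl_on_def)
      have "?g x = ?g y" using p xy eq by (simp add: equiv_class_eq)
      then show "p \<in> \<phi>" using xy xyc gin eT unfolding \<phi>_def equiv_def refl_on_def by auto
    qed
    have "Id_on (carrier ?B) \<subseteq> \<Theta>" "\<Theta> \<subseteq> carrier ?B \<times> carrier ?B"
      using eT by (auto simp: equiv_def refl_on_def)
    then obtain X Y where XY: "(X,Y) \<in> \<Theta>" "X \<noteq> Y" using T(2) by auto
    then have "X \<in> carrier A // \<psi>" "Y \<in> carrier A // \<psi>" using eT cB by (auto simp: equiv_def refl_on_def)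
    then obtain x y where x: "x \<in> carrier A" "X = ?g x" and y: "y \<in> carrier A" "Y = ?g y"
      by (auto elim!: quotientE)
    have "(x,y) \<in> \<phi>" using XY x y unfolding \<phi>_def by simp
    moreover have "(x,y) \<notin> \<psi>" using XY x y eq by (simp add: eq_equiv_class_iff)
    ultimately have "\<phi> \<noteq> \<psi>" by blast
    then have "(a,b) \<in> \<phi>" using mx cphi sub by blast
    then show ?thesis unfolding \<phi>_def by simp
  qed
  have "(?g a, ?g b) \<in> \<Inter>{\<theta>. is_congruence ar ?B \<theta> \<and> \<theta> \<noteq> Id_on (carrier ?B)}"
    using key by blast
  then have "\<Inter>{\<theta>. is_congruence ar ?B \<theta> \<and> \<theta> \<noteq> Id_on (carrier ?B)} \<noteq> Id_on (carrier ?B)"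
    using gab by (metis Id_onE prod.inject)
  moreover have "\<exists>x\<in>carrier ?B. \<exists>y\<in>carrier ?B. x \<noteq> y" using gin a b gab by blast
  ultimately show ?thesis using quot_algebra[OF alg c] unfolding subdirectly_irreducible_def by blast
qed

lemma ext_cong:
  "is_congruence (ext_ar ar) (ext_alg A \<tau>) \<theta> \<longleftrightarrow>
   is_congruence ar A \<theta> \<and> (\<forall>x y. (x,y) \<in> \<theta> \<longrightarrow> (\<tau> x, \<tau> y) \<in> \<theta>)"
proof
  assume c: "is_congruence (ext_ar ar) (ext_alg A \<tau>) \<theta>"
  have "(ops A f xs, ops A f ys) \<in> \<theta>"
    if "length xs = ar f" "length ys = ar f" "list_all2 (\<lambda>x y. (x, y) \<in> \<theta>) xs ys" for f xs ys
    using c that unfolding is_congruence_def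
    by (erule_tac conjE, erule_tac x="Some f" in allE) (simp add: ext_ar_def ext_alg_def)
  moreover have "(\<tau> x, \<tau> y) \<in> \<theta>" if "(x,y) \<in> \<theta>" for x y
    using c that unfolding is_congruence_def
    by (erule_tac conjE, erule_tac x="None" in allE, erule_tac x="[x]" in allE, erule_tac x="[y]" in allE)
      (simp add: ext_ar_def ext_alg_def)
  ultimately show "is_congruence ar A \<theta> \<and> (\<forall>x y. (x,y) \<in> \<theta> \<longrightarrow> (\<tau> x, \<tau> y) \<in> \<theta>)"
    using c by (simp add: is_congruence_def ext_alg_def)
next
  assume c: "is_congruence ar A \<theta> \<and> (\<forall>x y. (x,y) \<in> \<theta> \<longrightarrow> (\<tau> x, \<tau> y) \<in> \<theta>)"
  have "(ops (ext_alg A \<tau>) g xs, ops (ext_alg A \<tau>) g ys) \<in> \<theta>"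
    if l: "length xs = ext_ar ar g" "length ys = ext_ar ar g" "list_all2 (\<lambda>x y. (x, y) \<in> \<theta>) xs ys" for g xs ys
  proof (cases g)
    case None
    then obtain x y where "xs = [x]" "ys = [y]" using l by (auto simp: ext_ar_def length_Suc_conv)
    then show ?thesis using None l c by (simp add: ext_alg_def)
  next
    case (Some f)
    then show ?thesis using l c by (simp add: ext_alg_def ext_ar_def is_congruence_def)
  qed
  then show "is_congruence (ext_ar ar) (ext_alg A \<tau>) \<theta>"
    using c by (simp add: is_congruence_def ext_alg_def)
qed

theorem theorem3p7:
  fixes ar :: "'f \<Rightarrow> nat" and A :: "('f, 'a) alg" and \<tau> :: "'a \<Rightarrow> 'a"
  assumes "state_morphism_algebra ar A \<tau>"
    and "subdirectly_irreducible (ext_ar ar) (ext_alg A \<tau>)"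
  shows "\<exists>(B :: ('f, 'a set) alg) h.
           subdirectly_irreducible ar B \<and>
           is_embedding (ext_ar ar) (ext_alg A \<tau>) (D_alg B) h"
proof -
  have alg: "is_algebra ar A" and th: "is_hom ar A A \<tau>" and idem: "\<And>x. x \<in> carrier A \<Longrightarrow> \<tau> (\<tau> x) = \<tau> x"
    using assms(1) by (auto simp: state_morphism_algebra_def is_state_morphism_def)
  have tc: "\<And>x. x \<in> carrier A \<Longrightarrow> \<tau> x \<in> carrier A" using th by (simp add: is_hom_def)
  have tops: "\<And>f xs. length xs = ar f \<Longrightarrow> set xs \<subseteq> carrier A \<Longrightarrow> \<tau> (ops A f xs) = ops A f (map \<tau> xs)"
    using th by (simp add: is_hom_def)
  have cE: "carrier (ext_alg A \<tau>) = carrier A" by (simp add: ext_alg_def)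
  let ?M = "\<Inter>{\<theta>. is_congruence (ext_ar ar) (ext_alg A \<tau>) \<theta> \<and> \<theta> \<noteq> Id_on (carrier A)}"
  have M: "?M \<noteq> Id_on (carrier A)" and nt: "\<exists>x\<in>carrier A. \<exists>y\<in>carrier A. x \<noteq> y"
    using assms(2) by (auto simp: subdirectly_irreducible_def cE)
  let ?F = "carrier A \<times> carrier A"
  have "is_congruence ar A ?F"
  proof -
    have "equiv (carrier A) ?F" by (auto simp: equiv_def refl_on_def sym_def trans_def)
    moreover have "(ops A f xs, ops A f ys) \<in> ?F"
      if "length xs = ar f" "length ys = ar f" "list_all2 (\<lambda>x y. (x, y) \<in> ?F) xs ys" for f xs ys
    proof -
      have "set xs \<subseteq> carrier A" "set ys \<subseteq> carrier A"
        using that(3) by (induct xs ys rule: list_all2_induct; auto)+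
      then show ?thesis using alg that by (simp add: is_algebra_def)
    qed
    ultimately show ?thesis unfolding is_congruence_def by blast
  qed
  then have Fc: "is_congruence (ext_ar ar) (ext_alg A \<tau>) ?F" using tc by (simp add: ext_cong)
  have "?F \<noteq> Id_on (carrier A)" using nt by auto
  then have MF: "?M \<subseteq> ?F" using Fc by blast
  have "Id_on (carrier A) \<subseteq> ?M"
  proof
    fix p assume "p \<in> Id_on (carrier A)"
    then obtain x where p: "p = (x,x)" "x \<in> carrier A" by auto
    show "p \<in> ?M"
    proof
      fix \<theta> assume "\<theta> \<in> {\<theta>. is_congruence (ext_ar ar) (ext_alg A \<tau>) \<theta> \<and> \<theta> \<noteq> Id_on (carrier A)}"
      then have "equiv (carrier A) \<theta>" by (simp add: is_congruence_def cE)
      then show "p \<in> \<theta>" using p by (auto simp: equiv_def refl_on_def)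
    qed
  qed
  then obtain p where p: "p \<in> ?M" "p \<notin> Id_on (carrier A)" using M by blast
  obtain a b where pab: "p = (a,b)" by (cases p)
  have abM: "(a,b) \<in> ?M" using p pab by simp
  have abc: "a \<in> carrier A" "b \<in> carrier A" using abM MF by blast+
  have ab: "a \<noteq> b" "a \<in> carrier A" "b \<in> carrier A" using abc p pab by auto
  obtain \<psi> where c: "is_congruence ar A \<psi>" and abn: "(a,b) \<notin> \<psi>"
    and mx: "\<forall>\<theta>. is_congruence ar A \<theta> \<and> (a,b) \<notin> \<theta> \<and> \<psi> \<subseteq> \<theta> \<longrightarrow> \<theta> = \<psi>"
    using max_cong_exists[OF alg ab(1)] by blast
  have eq: "equiv (carrier A) \<psi>" using c by (simp add: is_congruence_def)
  define B where "B = quot_alg A \<psi>"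
  have SI: "subdirectly_irreducible ar B"
    unfolding B_def by (rule quot_SI[OF alg c ab(2,3) abn mx])
  define g where "g = (\<lambda>x. \<psi> `` {x})"
  have gh: "is_hom ar A B g" unfolding g_def B_def by (rule quot_hom[OF alg c])
  define \<psi>' where "\<psi>' = {(x,y). (x,y) \<in> \<psi> \<and> (\<tau> x, \<tau> y) \<in> \<psi>}"
  have "is_congruence ar A \<psi>'"
  proof -
    have psub: "\<psi> \<subseteq> ?F" using eq by (simp add: equiv_def)
    have "equiv (carrier A) \<psi>'"
    proof (rule equivI)
      show "\<psi>' \<subseteq> ?F" using psub unfolding \<psi>'_def by blast
      show "refl_on (carrier A) \<psi>'" using eq tc unfolding \<psi>'_def equiv_def refl_on_def by simp
      show "sym \<psi>'" using eq unfolding \<psi>'_def equiv_def sym_def by blast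
      show "trans \<psi>'" using eq unfolding \<psi>'_def equiv_def trans_def by blast
    qed
    moreover have "(ops A f xs, ops A f ys) \<in> \<psi>'"
      if l: "length xs = ar f" "length ys = ar f" "list_all2 (\<lambda>x y. (x, y) \<in> \<psi>') xs ys" for f xs ys
    proof -
      have l1: "list_all2 (\<lambda>x y. (x, y) \<in> \<psi>) xs ys"
        using l(3) by (rule list_all2_mono) (simp add: \<psi>'_def)
      have l2: "list_all2 (\<lambda>x y. (x, y) \<in> \<psi>) (map \<tau> xs) (map \<tau> ys)"
        using l(3) unfolding list_all2_map1 list_all2_map2 by (rule list_all2_mono) (simp add: \<psi>'_def)
      have s: "set xs \<subseteq> carrier A" "set ys \<subseteq> carrier A" using list_all2_carrier[OF c l1] by auto
      have "(ops A f xs, ops A f ys) \<in> \<psi>" using c l l1 by (simp add: is_congruence_def)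
      moreover have "(ops A f (map \<tau> xs), ops A f (map \<tau> ys)) \<in> \<psi>" using c l l2 by (simp add: is_congruence_def)
      ultimately show ?thesis using tops[OF l(1) s(1)] tops[OF l(2) s(2)] unfolding \<psi>'_def by simp
    qed
    ultimately show ?thesis unfolding is_congruence_def by blast
  qed
  moreover have "(\<tau> x, \<tau> y) \<in> \<psi>'" if "(x,y) \<in> \<psi>'" for x y
  proof -
    have "x \<in> carrier A" "y \<in> carrier A" using that eq unfolding \<psi>'_def equiv_def by auto
    then show ?thesis using that idem unfolding \<psi>'_def by simp
  qed
  ultimately have c': "is_congruence (ext_ar ar) (ext_alg A \<tau>) \<psi>'" by (simp add: ext_cong)
  have pid: "\<psi>' = Id_on (carrier A)"
  proof (rule ccontr)
    assume "\<psi>' \<noteq> Id_on (carrier A)"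
    then have "(a,b) \<in> \<psi>'" using abM c' by blast
    then show False using abn unfolding \<psi>'_def by simp
  qed
  have inj: "x = y" if "(x,y) \<in> \<psi>" "(\<tau> x, \<tau> y) \<in> \<psi>" for x y
  proof -
    have "(x,y) \<in> \<psi>'" using that by (simp add: \<psi>'_def)
    then show ?thesis using pid by auto
  qed
  define h where "h = (\<lambda>x. (g (\<tau> x), g x))"
  have "is_embedding (ext_ar ar) (ext_alg A \<tau>) (D_alg B) h"
    unfolding is_embedding_def is_hom_def
  proof (intro conjI ballI allI impI)
    fix x assume "x \<in> carrier (ext_alg A \<tau>)"
    then have "x \<in> carrier A" by (simp add: cE)
    then show "h x \<in> carrier (D_alg B)"
      using gh tc unfolding h_def is_hom_def by (simp add: D_alg_def ext_alg_def square_alg_def)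
  next
    fix G xs assume l: "length xs = ext_ar ar G \<and> set xs \<subseteq> carrier (ext_alg A \<tau>)"
    show "h (ops (ext_alg A \<tau>) G xs) = ops (D_alg B) G (map h xs)"
    proof (cases G)
      case None
      then obtain x where x: "xs = [x]" using l by (auto simp: ext_ar_def length_Suc_conv)
      then have "x \<in> carrier A" using l by (simp add: cE)
      then show ?thesis using None x idem
        by (simp add: h_def ext_alg_def D_alg_def diag_tau_def)
    next
      case (Some f)
      then have lf: "length xs = ar f" "set xs \<subseteq> carrier A" using l by (auto simp: ext_ar_def cE)
      have s2: "set (map \<tau> xs) \<subseteq> carrier A" using lf tc by auto
      have "g (ops A f xs) = ops B f (map g xs)" using gh lf unfolding is_hom_def by blast
      moreover have "g (ops A f (map \<tau> xs)) = ops B f (map g (map \<tau> xs))"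
        using gh lf s2 unfolding is_hom_def by simp
      ultimately show ?thesis using Some tops[OF lf]
        by (simp add: h_def ext_alg_def D_alg_def square_alg_def o_def)
    qed
  next
    show "inj_on h (carrier (ext_alg A \<tau>))"
    proof (rule inj_onI)
      fix x y assume xy: "x \<in> carrier (ext_alg A \<tau>)" "y \<in> carrier (ext_alg A \<tau>)" "h x = h y"
      then have xc: "x \<in> carrier A" "y \<in> carrier A" by (auto simp: cE)
      from xy(3) have "g x = g y" "g (\<tau> x) = g (\<tau> y)" by (auto simp: h_def)
      then have "(x,y) \<in> \<psi>" "(\<tau> x, \<tau> y) \<in> \<psi>"
        using xc tc eq by (auto simp: g_def eq_equiv_class_iff)
      then show "x = y" by (rule inj)
    qed
  qed
  then show ?thesis using SI by blast
qed

end
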